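(* Let $\mathbb{F}$ be a field, $\mathcal{S}\subseteq 2^{[n]}$ a Sperner family and $h:\mathcal{S}\to 2^{[n]}$ a function with $h(S)\subseteq S$ for every $S\in\mathcal{S}$. Then $\mathbb{G}=\mathbb{G}(\mathcal{S},h)$ is a Gröbner basis of the ideal $\langle\mathbb{G}\rangle\subseteq\mathbb{F}[x_1,\dots,x_n]$ with respect to some term order if and only if $|\mathcal{H}(\mathcal{S})|=|\mathcal{F}(\mathcal{S},h)|$.
   Context: $[n]=\{1,\dots,n\}$. A Sperner family is a family of sets none of which is contained in another. For $H\subseteq S\subseteq[n]$, $\mathcal{Q}_{S,H}=\{H\cup B: B\subseteq[n]\setminus S\}$; $\mathcal{H}(\mathcal{S})=\{F\subseteq[n]: \text{no } S\in\mathcal{S} \text{ satisfies } S\subseteq F\}$; $\mathcal{F}(\mathcal{S},h)=2^{[n]}\setminus\bigcup_{S\in\mathcal{S}}\mathcal{Q}_{S,h(S)}$. For $H\subseteq[n]$ put $\mathbf{x}_H=\prod_{i\in H}x_i$, and for $H\subseteq S\subseteq[n]$ put $f_{S,H}(\mathbf{x})=\mathbf{x}_H\prod_{i\in S\setminus H}(x_i-1)$. Define $\mathbb{G}(\mathcal{S},h)=\{f_{S,h(S)}: S\in\mathcal{S}\}\cup\{x_i^2-x_i: i\in[n]\}$. A term order is a total order on monomials of $\mathbb{F}[x_1,\dots,x_n]$ with $1$ minimal and compatible with multiplication by monomials; $\mathrm{lm}(f)$ is the largest monomial of $f\neq0$ with nonzero coefficient. A finite $\mathbb{G}\subseteq I$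 is a Gröbner basis of an ideal $I$ with respect to a term order if for every nonzero $f\in I$ some $g\in\mathbb{G}$ has $\mathrm{lm}(g)$ dividing $\mathrm{lm}(f)$. *)

theory Defs
  imports Main "HOL-Library.Poly_Mapping"
begin

text \<open>Multivariate polynomials over a field 'a: finitely supported maps from monomials
(finitely supported exponent vectors) to coefficients, with convolution product.
Variables are x_i, i \<in> {1..n}.\<close>

type_synonym mon = "nat \<Rightarrow>\<^sub>0 nat"
type_synonym 'a mpoly = "mon \<Rightarrow>\<^sub>0 'a"

definition monomials :: "nat \<Rightarrow> mon set" where
  "monomials n = {m. Poly_Mapping.keys m \<subseteq> {1..n}}"

definition polyring :: "nat \<Rightarrow> ('a::field) mpoly set" where
  "polyring n = {p. Poly_Mapping.keys p \<subseteq> monomials n}"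

definition X :: "nat \<Rightarrow> ('a::field) mpoly" where
  "X i = Poly_Mapping.single (Poly_Mapping.single i 1) 1"

definition gen_ideal :: "nat \<Rightarrow> ('a::field) mpoly set \<Rightarrow> 'a mpoly set" where
  "gen_ideal n G = {(\<Sum>g\<in>G. q g * g) | q. \<forall>g\<in>G. q g \<in> polyring n}"

definition term_order :: "nat \<Rightarrow> (mon \<Rightarrow> mon \<Rightarrow> bool) \<Rightarrow> bool" where
  "term_order n le \<longleftrightarrow>
     (\<forall>a\<in>monomials n. le a a) \<and>
     (\<forall>a\<in>monomials n. \<forall>b\<in>monomials n. le a b \<and> le b a \<longrightarrow> a = b) \<and>
     (\<forall>a\<in>monomials n. \<forall>b\<in>monomials n. \<forall>c\<in>monomials n. le a b \<and> le b c \<longrightarrow> le a c) \<and>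
     (\<forall>a\<in>monomials n. \<forall>b\<in>monomials n. le a b \<or> le b a) \<and>
     (\<forall>a\<in>monomials n. le 0 a) \<and>
     (\<forall>a\<in>monomials n. \<forall>b\<in>monomials n. \<forall>c\<in>monomials n. le a b \<longrightarrow> le (a + c) (b + c))"

definition lm :: "(mon \<Rightarrow> mon \<Rightarrow> bool) \<Rightarrow> ('a::zero) mpoly \<Rightarrow> mon" where
  "lm le f = (THE m. m \<in> Poly_Mapping.keys f \<and> (\<forall>m'\<in>Poly_Mapping.keys f. le m' m))"

definition mon_dvd :: "mon \<Rightarrow> mon \<Rightarrow> bool" where
  "mon_dvd a b \<longleftrightarrow> (\<forall>i. Poly_Mapping.lookup a i \<le> Poly_Mapping.lookup b i)"

definition groebner_basis :: "(mon \<Rightarrow> mon \<Rightarrow> bool) \<Rightarrow> ('a::field) mpoly set \<Rightarrow> 'a mpoly set \<Rightarrow> bool" where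
  "groebner_basis le G I \<longleftrightarrow> finite G \<and> G \<subseteq> I \<and>
     (\<forall>f\<in>I. f \<noteq> 0 \<longrightarrow> (\<exists>g\<in>G. g \<noteq> 0 \<and> mon_dvd (lm le g) (lm le f)))"

definition sperner :: "nat set set \<Rightarrow> bool" where
  "sperner S \<longleftrightarrow> (\<forall>A\<in>S. \<forall>B\<in>S. A \<subseteq> B \<longrightarrow> A = B)"

definition Q :: "nat \<Rightarrow> nat set \<Rightarrow> nat set \<Rightarrow> nat set set" where
  "Q n S H = {H \<union> B | B. B \<subseteq> {1..n} - S}"

definition HH :: "nat \<Rightarrow> nat set set \<Rightarrow> nat set set" where
  "HH n S = {F. F \<subseteq> {1..n} \<and> \<not> (\<exists>A\<in>S. A \<subseteq> F)}"

definition FF :: "nat \<Rightarrow> nat set set \<Rightarrow> (nat set \<Rightarrow> nat set) \<Rightarrow> nat set set" where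
  "FF n S h = Pow {1..n} - (\<Union>A\<in>S. Q n A (h A))"

definition xH :: "nat set \<Rightarrow> ('a::field) mpoly" where
  "xH H = (\<Prod>i\<in>H. X i)"

definition fSH :: "nat set \<Rightarrow> nat set \<Rightarrow> ('a::field) mpoly" where
  "fSH S H = xH H * (\<Prod>i\<in>S - H. X i - 1)"

definition GG :: "nat \<Rightarrow> nat set set \<Rightarrow> (nat set \<Rightarrow> nat set) \<Rightarrow> ('a::field) mpoly set" where
  "GG n S h = {fSH A (h A) | A. A \<in> S} \<union> {X i ^ 2 - X i | i. i \<in> {1..n}}"

end

theory Submission
  imports Defs "HOL-Library.Function_Algebras" "HOL.Vector_Spaces"
begin


lemma fun_sum_apply: "(sum f A) x = sum (\<lambda>i. f i x) A"
  by (induction A rule: infinite_finite_induct) auto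

interpretation fv: vector_space "\<lambda>(c::'a::field) (f::nat set \<Rightarrow> 'a) x. c * f x"
  by unfold_locales (auto simp: fun_eq_iff algebra_simps)

thm fv.span_base fv.dependent_finite fv.independent_span_bound

lemma zero_le_mon: "(0::mon) \<le> a"
proof -
  have "less_fun (\<lambda>_. 0::nat) (Poly_Mapping.lookup a) \<or> a = 0"
  proof (cases "a = 0")
    case False
    then obtain k where k: "Poly_Mapping.lookup a k \<noteq> 0"
      by (metis poly_mapping_eqI lookup_zero)
    define k0 where "k0 = (LEAST k. Poly_Mapping.lookup a k \<noteq> 0)"
    have "Poly_Mapping.lookup a k0 \<noteq> 0" using k unfolding k0_def by (rule LeastI)
    moreover have "\<forall>k'<k0. Poly_Mapping.lookup a k' = 0" unfolding k0_def
      using not_less_Least by blast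
    ultimately show ?thesis unfolding less_fun_def by auto
  qed auto
  then show ?thesis by transfer auto
qed



definition mn :: "nat set \<Rightarrow> mon" where "mn T = (\<Sum>i\<in>T. Poly_Mapping.single i 1)"

lemma lookup_mn: "finite T \<Longrightarrow> Poly_Mapping.lookup (mn T) i = (if i \<in> T then 1 else 0)"
  by (simp add: mn_def lookup_sum lookup_single when_def)

lemma keys_mn: "finite T \<Longrightarrow> Poly_Mapping.keys (mn T) = T"
  by (auto simp: in_keys_iff lookup_mn split: if_splits)

lemma mn_inj: "finite T \<Longrightarrow> finite U \<Longrightarrow> mn T = mn U \<longleftrightarrow> T = U"
  by (metis keys_mn)

lemma mn_union: "finite A \<Longrightarrow> finite B \<Longrightarrow> A \<inter> B = {} \<Longrightarrow> mn (A \<union> B) = mn A + mn B"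
  by (simp add: mn_def sum.union_disjoint)

lemma mn_empty[simp]: "mn {} = 0" by (simp add: mn_def)

lemma xH_eq: "finite T \<Longrightarrow> (xH T :: 'a::field mpoly) = Poly_Mapping.single (mn T) 1"
proof (induction T rule: finite_induct)
  case empty then show ?case by (simp add: xH_def)
next
  case (insert i T)
  have "(xH (insert i T) :: 'a mpoly) = X i * xH T" using insert by (simp add: xH_def)
  also have "\<dots> = Poly_Mapping.single (Poly_Mapping.single i 1 + mn T) 1"
    using insert by (simp add: X_def mult_single)
  also have "Poly_Mapping.single i 1 + mn T = mn (insert i T)"
    using insert by (simp add: mn_def)
  finally show ?case .
qed

lemma xH_union: "finite A \<Longrightarrow> finite B \<Longrightarrow> A \<inter> B = {} \<Longrightarrow> (xH (A \<union> B) :: 'a::field mpoly) = xH A * xH B"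
  by (simp add: xH_def prod.union_disjoint)

lemma single_const_mult: "Poly_Mapping.single 0 c * Poly_Mapping.single m d = Poly_Mapping.single m (c * d)"
  by (simp add: mult_single)

lemma neg_one_pow_single: "((-1) ^ k :: 'a::field mpoly) = Poly_Mapping.single 0 ((-1) ^ k)"
  by (induction k) (auto simp: mult_single single_uminus)

lemma fSH_expand:
  assumes "finite S" "H \<subseteq> S"
  shows "(fSH S H :: 'a::field mpoly) = (\<Sum>B\<in>Pow (S - H). Poly_Mapping.single (mn (H \<union> B)) ((-1) ^ card (S - H - B)))"
proof -
  have fH: "finite H" using assms finite_subset by blast
  have "(\<Prod>i\<in>S - H. X i - 1 :: 'a mpoly) = (\<Prod>i\<in>S - H. X i + (-1))" by simp
  also have "\<dots> = (\<Sum>B\<in>Pow (S - H). (\<Prod>i\<in>B. X i) * (\<Prod>i\<in>S - H - B. -1))"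
    using assms by (intro prod_add) auto
  also have "\<dots> = (\<Sum>B\<in>Pow (S - H). xH B * (-1) ^ card (S - H - B))"
    by (simp only: xH_def prod_constant)
  finally have e: "(\<Prod>i\<in>S - H. X i - 1 :: 'a mpoly) = (\<Sum>B\<in>Pow (S - H). xH B * (-1) ^ card (S - H - B))" .
  have "(fSH S H :: 'a mpoly) = (\<Sum>B\<in>Pow (S - H). xH H * (xH B * (-1) ^ card (S - H - B)))"
    unfolding fSH_def e by (simp add: sum_distrib_left)
  also have "\<dots> = (\<Sum>B\<in>Pow (S - H). Poly_Mapping.single (mn (H \<union> B)) ((-1) ^ card (S - H - B)))"
  proof (rule sum.cong)
    fix B assume B: "B \<in> Pow (S - H)"
    then have fB: "finite B" using assms finite_subset by (metis PowD finite_Diff)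
    have "xH H * (xH B * (-1) ^ card (S - H - B)) = (xH (H \<union> B) :: 'a mpoly) * (-1) ^ card (S - H - B)"
      using B fH fB by (subst xH_union) (auto simp: mult.assoc)
    also have "\<dots> = Poly_Mapping.single (mn (H \<union> B)) ((-1) ^ card (S - H - B))"
      using fH fB by (simp add: xH_eq neg_one_pow_single mult_single)
    finally show "xH H * (xH B * (-1) ^ card (S - H - B)) = Poly_Mapping.single (mn (H \<union> B)) ((-1) ^ card (S - H - B) :: 'a)" .
  qed simp
  finally show ?thesis .
qed

lemma fSH_keys:
  assumes "finite S" "H \<subseteq> S"
  shows "Poly_Mapping.keys (fSH S H :: 'a::field mpoly) \<subseteq> {mn U | U. U \<subseteq> S}"
proof -
  have "Poly_Mapping.keys (fSH S H :: 'a mpoly) \<subseteq> (\<Union>B\<in>Pow (S - H). Poly_Mapping.keys (Poly_Mapping.single (mn (H \<union> B)) ((-1) ^ card (S - H - B) :: 'a)))"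
    unfolding fSH_expand[OF assms] by (rule keys_sum)
  also have "\<dots> \<subseteq> {mn U | U. U \<subseteq> S}" using assms by auto
  finally show ?thesis .
qed

lemma fSH_lookup_top:
  assumes "finite S" "H \<subseteq> S"
  shows "Poly_Mapping.lookup (fSH S H :: 'a::field mpoly) (mn S) = 1"
proof -
  have fin: "finite (Pow (S - H))" using assms by auto
  have "Poly_Mapping.lookup (fSH S H :: 'a mpoly) (mn S) =
     (\<Sum>B\<in>Pow (S - H). if B = S - H then 1 else 0)"
    unfolding fSH_expand[OF assms] lookup_sum
  proof (rule sum.cong)
    fix B assume B: "B \<in> Pow (S - H)"
    have fB: "finite B" "finite H" using B assms finite_subset by (metis PowD finite_Diff) (use assms finite_subset in blast)
    have "mn (H \<union> B) = mn S \<longleftrightarrow> H \<union> B = S" using fB assms by (intro mn_inj) auto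
    also have "\<dots> \<longleftrightarrow> B = S - H" using B assms by auto
    finally show "Poly_Mapping.lookup (Poly_Mapping.single (mn (H \<union> B)) ((-1) ^ card (S - H - B))) (mn S) = (if B = S - H then 1 else (0::'a))"
      by (auto simp: lookup_single when_def)
  qed simp
  also have "\<dots> = 1" using fin by (simp add: sum.delta')
  finally show ?thesis .
qed



lemma to_refl: "term_order n le \<Longrightarrow> a \<in> monomials n \<Longrightarrow> le a a"
  unfolding term_order_def by blast
lemma to_antisym: "term_order n le \<Longrightarrow> a \<in> monomials n \<Longrightarrow> b \<in> monomials n \<Longrightarrow> le a b \<Longrightarrow> le b a \<Longrightarrow> a = b"
  unfolding term_order_def by blast
lemma to_trans: "term_order n le \<Longrightarrow> a \<in> monomials n \<Longrightarrow> b \<in> monomials n \<Longrightarrow> c \<in> monomials n \<Longrightarrow> le a b \<Longrightarrow> le b c \<Longrightarrow> le a c"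
  unfolding term_order_def by blast
lemma to_total: "term_order n le \<Longrightarrow> a \<in> monomials n \<Longrightarrow> b \<in> monomials n \<Longrightarrow> le a b \<or> le b a"
  unfolding term_order_def by blast
lemma to_zero: "term_order n le \<Longrightarrow> a \<in> monomials n \<Longrightarrow> le 0 a"
  unfolding term_order_def by blast
lemma to_add: "term_order n le \<Longrightarrow> a \<in> monomials n \<Longrightarrow> b \<in> monomials n \<Longrightarrow> c \<in> monomials n \<Longrightarrow> le a b \<Longrightarrow> le (a + c) (b + c)"
  unfolding term_order_def by blast

lemma lm_eqI:
  assumes to: "term_order n le" and ks: "Poly_Mapping.keys f \<subseteq> monomials n"
    and m: "m \<in> Poly_Mapping.keys f" and mx: "\<forall>m'\<in>Poly_Mapping.keys f. le m' m"
  shows "lm le f = m"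
  unfolding lm_def
proof (rule the_equality)
  show "m \<in> Poly_Mapping.keys f \<and> (\<forall>m'\<in>Poly_Mapping.keys f. le m' m)" using m mx by blast
next
  fix m'' assume a: "m'' \<in> Poly_Mapping.keys f \<and> (\<forall>m'\<in>Poly_Mapping.keys f. le m' m'')"
  then have "le m'' m" "le m m''" using mx m by auto
  then show "m'' = m" using to_antisym[OF to] a m ks by blast
qed

lemma max_exists:
  assumes to: "term_order n le" and "finite A" "A \<noteq> {}" "A \<subseteq> monomials n"
  shows "\<exists>m\<in>A. \<forall>m'\<in>A. le m' m"
  using assms(2-4)
proof (induction A rule: finite_ne_induct)
  case (singleton x) then show ?case using to_refl[OF to] by auto
next
  case (insert x F)
  then obtain m where m: "m \<in> F" "\<forall>m'\<in>F. le m' m" by auto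
  have xm: "x \<in> monomials n" "m \<in> monomials n" using insert m by auto
  show ?case
  proof (cases "le x m")
    case True then show ?thesis using m by auto
  next
    case False
    then have "le m x" using to_total[OF to xm] by blast
    then have "\<forall>m'\<in>F. le m' x" using m to_trans[OF to] xm insert.prems by blast
    then show ?thesis using to_refl[OF to xm(1)] by auto
  qed
qed

lemma lm_props:
  assumes to: "term_order n le" and ks: "Poly_Mapping.keys f \<subseteq> monomials n" and f: "f \<noteq> 0"
  shows "lm le f \<in> Poly_Mapping.keys f" "\<forall>m'\<in>Poly_Mapping.keys f. le m' (lm le f)"
proof -
  obtain m where m: "m \<in> Poly_Mapping.keys f" "\<forall>m'\<in>Poly_Mapping.keys f. le m' m"
    using max_exists[OF to finite_keys _ ks] f by auto
  then have "lm le f = m" using lm_eqI[OF to ks] by blast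
  then show "lm le f \<in> Poly_Mapping.keys f" "\<forall>m'\<in>Poly_Mapping.keys f. le m' (lm le f)" using m by auto
qed

lemma lookup_minus_mon: "Poly_Mapping.lookup (b - a :: mon) i = Poly_Mapping.lookup b i - Poly_Mapping.lookup a i"
  by transfer simp

lemma dvd_le:
  assumes to: "term_order n le" and a: "a \<in> monomials n" and b: "b \<in> monomials n"
    and d: "mon_dvd a b"
  shows "le a b"
proof -
  have c: "b - a \<in> monomials n" using b unfolding monomials_def
    by (auto simp: in_keys_iff lookup_minus_mon)
  have "b = (b - a) + a" using d unfolding mon_dvd_def
    by (intro poly_mapping_eqI) (simp add: lookup_add lookup_minus_mon)
  have "le 0 (b - a)" using to_zero[OF to c] .
  moreover have "0 \<in> monomials n" by (simp add: monomials_def)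
  ultimately have "le (0 + a) ((b - a) + a)"
    using to_add[OF to _ c a] by blast
  then show ?thesis using \<open>b = (b - a) + a\<close> by simp
qed



lemma mon_add: "a \<in> monomials n \<Longrightarrow> b \<in> monomials n \<Longrightarrow> a + b \<in> monomials n"
  using keys_add[of a b] unfolding monomials_def by auto

lemma polyring_add: "p \<in> polyring n \<Longrightarrow> q \<in> polyring n \<Longrightarrow> p + q \<in> polyring n"
  using keys_add[of p q] unfolding polyring_def by auto

lemma keys_uminus_pm: "Poly_Mapping.keys (- p) = Poly_Mapping.keys (p::'a::ab_group_add mpoly)"
  by (auto simp: in_keys_iff)

lemma polyring_uminus: "p \<in> polyring n \<Longrightarrow> - p \<in> polyring n"
  unfolding polyring_def by (simp add: keys_uminus_pm)

lemma polyring_diff: "p \<in> polyring n \<Longrightarrow> q \<in> polyring n \<Longrightarrow> p - q \<in> polyring n"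
  using polyring_add[of p n "- q"] polyring_uminus[of q n] by (simp only: diff_conv_add_uminus)

lemma polyring_mult: "p \<in> polyring n \<Longrightarrow> q \<in> polyring n \<Longrightarrow> p * q \<in> polyring n"
proof -
  assume p: "p \<in> polyring n" and q: "q \<in> polyring n"
  have "Poly_Mapping.keys (p * q) \<subseteq> monomials n"
  proof
    fix x assume "x \<in> Poly_Mapping.keys (p * q)"
    then obtain a b where "x = a + b" "a \<in> Poly_Mapping.keys p" "b \<in> Poly_Mapping.keys q"
      using keys_mult[of p q] by blast
    then show "x \<in> monomials n" using p q mon_add unfolding polyring_def by blast
  qed
  then show ?thesis unfolding polyring_def by simp
qed

lemma polyring_zero: "0 \<in> polyring n" by (simp add: polyring_def)

lemma polyring_single: "m \<in> monomials n \<Longrightarrow> Poly_Mapping.single m c \<in> polyring n"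
  by (simp add: polyring_def)

lemma polyring_one: "1 \<in> polyring n"
  by (simp add: polyring_def monomials_def)

lemma polyring_X: "i \<in> {1..n} \<Longrightarrow> X i \<in> polyring n"
  by (simp add: polyring_def monomials_def X_def)

lemma polyring_sum: "(\<And>x. x \<in> A \<Longrightarrow> f x \<in> polyring n) \<Longrightarrow> sum f A \<in> polyring n"
  by (induction A rule: infinite_finite_induct) (auto intro: polyring_add polyring_zero)

lemma polyring_prod: "(\<And>x. x \<in> A \<Longrightarrow> f x \<in> polyring n) \<Longrightarrow> prod f A \<in> polyring n"
  by (induction A rule: infinite_finite_induct) (auto intro: polyring_mult polyring_one)

lemma polyring_power: "p \<in> polyring n \<Longrightarrow> p ^ k \<in> polyring n"
  by (induction k) (auto intro: polyring_mult polyring_one)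

lemma gi_intro: "f = (\<Sum>g\<in>G. q g * g) \<Longrightarrow> \<forall>g\<in>G. q g \<in> polyring n \<Longrightarrow> f \<in> gen_ideal n G"
  unfolding gen_ideal_def by blast

lemma gi_zero: "0 \<in> gen_ideal n G"
  unfolding gen_ideal_def by (rule CollectI, rule exI[of _ "\<lambda>_. 0"]) (simp add: polyring_zero)

lemma gi_add: "f \<in> gen_ideal n G \<Longrightarrow> f' \<in> gen_ideal n G \<Longrightarrow> f + f' \<in> gen_ideal n G"
proof -
  assume "f \<in> gen_ideal n G" "f' \<in> gen_ideal n G"
  then obtain q q' where q: "f = (\<Sum>g\<in>G. q g * g)" "\<forall>g\<in>G. q g \<in> polyring n"
    and q': "f' = (\<Sum>g\<in>G. q' g * g)" "\<forall>g\<in>G. q' g \<in> polyring n"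
    unfolding gen_ideal_def by blast
  have "f + f' = (\<Sum>g\<in>G. (q g + q' g) * g)" using q q' by (simp add: sum.distrib algebra_simps)
  moreover have "\<forall>g\<in>G. q g + q' g \<in> polyring n" using q q' polyring_add by blast
  ultimately show ?thesis by (rule gi_intro)
qed

lemma gi_mult: "p \<in> polyring n \<Longrightarrow> f \<in> gen_ideal n G \<Longrightarrow> p * f \<in> gen_ideal n G"
proof -
  assume p: "p \<in> polyring n" and "f \<in> gen_ideal n G"
  then obtain q where q: "f = (\<Sum>g\<in>G. q g * g)" "\<forall>g\<in>G. q g \<in> polyring n"
    unfolding gen_ideal_def by blast
  have "p * f = (\<Sum>g\<in>G. (p * q g) * g)" using q by (simp add: sum_distrib_left mult.assoc)
  moreover have "\<forall>g\<in>G. p * q g \<in> polyring n" using q p polyring_mult by blast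
  ultimately show ?thesis by (rule gi_intro)
qed

lemma gi_gen: "finite G \<Longrightarrow> g \<in> G \<Longrightarrow> g \<in> gen_ideal n G"
proof -
  assume G: "finite G" "g \<in> G"
  have "(\<Sum>g'\<in>G. (if g' = g then 1 else 0) * g') = (\<Sum>g'\<in>G. if g' = g then g' else 0)"
    by (rule sum.cong) auto
  also have "\<dots> = g" using G by (simp add: sum.delta')
  finally have "g = (\<Sum>g'\<in>G. (if g' = g then 1 else 0) * g')" by (rule sym)
  moreover have "\<forall>g'\<in>G. (if g' = g then 1 else 0) \<in> polyring n" by (simp add: polyring_one polyring_zero)
  ultimately show ?thesis by (rule gi_intro)
qed

lemma gi_sum: "(\<And>x. x \<in> A \<Longrightarrow> f x \<in> gen_ideal n G) \<Longrightarrow> sum f A \<in> gen_ideal n G"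
  by (induction A rule: infinite_finite_induct) (auto intro: gi_add gi_zero)

lemma gi_polyring: "G \<subseteq> polyring n \<Longrightarrow> gen_ideal n G \<subseteq> polyring n"
proof
  fix f assume G: "G \<subseteq> polyring n" and "f \<in> gen_ideal n G"
  then obtain q where q: "f = (\<Sum>g\<in>G. q g * g)" "\<forall>g\<in>G. q g \<in> polyring n"
    unfolding gen_ideal_def by blast
  show "f \<in> polyring n" unfolding q(1)
    by (rule polyring_sum, rule polyring_mult) (use q G in auto)
qed



definition chi :: "nat set \<Rightarrow> mon \<Rightarrow> 'a::field" where
  "chi w m = (if Poly_Mapping.keys m \<subseteq> w then 1 else 0)"

definition ev :: "nat set \<Rightarrow> 'a::field mpoly \<Rightarrow> 'a" where
  "ev w p = (\<Sum>m\<in>Poly_Mapping.keys p. Poly_Mapping.lookup p m * chi w m)"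

lemma ev_superset: "finite A \<Longrightarrow> Poly_Mapping.keys p \<subseteq> A \<Longrightarrow> ev w p = (\<Sum>m\<in>A. Poly_Mapping.lookup p m * chi w m)"
  unfolding ev_def by (rule sum.mono_neutral_left) (auto simp: in_keys_iff)

lemma ev_add: "ev w (p + q) = ev w p + ev w q"
proof -
  let ?A = "Poly_Mapping.keys p \<union> Poly_Mapping.keys q"
  have "ev w (p + q) = (\<Sum>m\<in>?A. Poly_Mapping.lookup (p + q) m * chi w m)"
    using keys_add[of p q] by (intro ev_superset) auto
  also have "\<dots> = (\<Sum>m\<in>?A. Poly_Mapping.lookup p m * chi w m) + (\<Sum>m\<in>?A. Poly_Mapping.lookup q m * chi w m)"
    by (simp add: lookup_add sum.distrib algebra_simps)
  also have "\<dots> = ev w p + ev w q"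
    using ev_superset[of ?A p w] ev_superset[of ?A q w] by simp
  finally show ?thesis .
qed

lemma ev_uminus: "ev w (- p) = - ev w p"
  unfolding ev_def keys_uminus_pm lookup_uminus by (simp only: mult_minus_left sum_negf)

lemma ev_diff: "ev w (p - q) = ev w p - ev w q"
  by (simp only: diff_conv_add_uminus ev_add ev_uminus)

lemma ev_zero: "ev w 0 = 0" by (simp add: ev_def)

lemma ev_sum: "ev w (sum f A) = (\<Sum>x\<in>A. ev w (f x))"
  by (induction A rule: infinite_finite_induct) (simp_all add: ev_zero ev_add)

lemma ev_single: "ev w (Poly_Mapping.single m c) = c * chi w m"
  by (cases "c = 0") (auto simp: ev_def ev_zero)

lemma poly_expand: "p = (\<Sum>m\<in>Poly_Mapping.keys p. Poly_Mapping.single m (Poly_Mapping.lookup p m))"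
  by (rule poly_mapping_eqI) (auto simp: lookup_sum lookup_single when_def in_keys_iff sum.delta)

lemma keys_add_mon: "Poly_Mapping.keys (a + b :: mon) = Poly_Mapping.keys a \<union> Poly_Mapping.keys b"
  by (auto simp: in_keys_iff lookup_add)

lemma chi_add: "chi w (a + b) = (chi w a * chi w b :: 'a::field)"
  by (simp add: chi_def keys_add_mon)

lemma ev_mult: "ev w (p * q) = ev w p * (ev w q :: 'a::field)"
proof -
  let ?p = "\<lambda>a. Poly_Mapping.lookup p a" and ?q = "\<lambda>b. Poly_Mapping.lookup q b"
  have "p * q = (\<Sum>a\<in>Poly_Mapping.keys p. Poly_Mapping.single a (?p a)) * (\<Sum>b\<in>Poly_Mapping.keys q. Poly_Mapping.single b (?q b))"
    using poly_expand[of p] poly_expand[of q] by simp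
  also have "\<dots> = (\<Sum>a\<in>Poly_Mapping.keys p. \<Sum>b\<in>Poly_Mapping.keys q. Poly_Mapping.single (a + b) (?p a * ?q b))"
    by (simp only: sum_product mult_single)
  finally have "ev w (p * q) = (\<Sum>a\<in>Poly_Mapping.keys p. \<Sum>b\<in>Poly_Mapping.keys q. ?p a * ?q b * chi w (a + b))"
    by (simp add: ev_sum ev_single)
  also have "\<dots> = (\<Sum>a\<in>Poly_Mapping.keys p. ?p a * chi w a) * (\<Sum>b\<in>Poly_Mapping.keys q. ?q b * chi w b)"
    unfolding sum_product chi_add by (intro sum.cong refl) (simp only: mult_ac)
  finally show ?thesis by (simp add: ev_def)
qed

lemma ev_one: "ev w 1 = (1::'a::field)"
proof -
  have "ev w (1::'a mpoly) = ev w (Poly_Mapping.single 0 1)" by simp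
  also have "\<dots> = 1" unfolding ev_single chi_def by simp
  finally show ?thesis .
qed

lemma ev_prod: "ev w (prod f A) = (\<Prod>x\<in>A. ev w (f x) :: 'a::field)"
  by (induction A rule: infinite_finite_induct) (auto simp: ev_one ev_mult)

lemma ev_X: "ev w (X i) = (if i \<in> w then 1 else (0::'a::field))"
  by (simp add: X_def ev_single chi_def)

lemma ev_power: "ev w (p ^ k) = (ev w p) ^ k"
  by (induction k) (auto simp: ev_one ev_mult)



abbreviation fsc :: "'a::field \<Rightarrow> (nat set \<Rightarrow> 'a) \<Rightarrow> (nat set \<Rightarrow> 'a)" where
  "fsc c f \<equiv> (\<lambda>x. c * f x)"


lemma alt_sum:
  assumes "finite A"
  shows "(\<Sum>B\<in>Pow A. (-1) ^ card B * (if B \<subseteq> w then 1 else 0)) = (if A \<inter> w = {} then 1 else (0::'a::field))"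
proof -
  have "(\<Sum>B\<in>Pow A. (-1) ^ card B * (if B \<subseteq> w then 1 else 0)) = (\<Sum>B\<in>Pow A. if B \<subseteq> w then (-1) ^ card B else (0::'a))"
    by (rule sum.cong) auto
  also have "\<dots> = (\<Sum>B\<in>{B\<in>Pow A. B \<subseteq> w}. (-1) ^ card B)"
    using assms by (intro sum.inter_filter[symmetric]) simp
  also have "{B\<in>Pow A. B \<subseteq> w} = Pow (A \<inter> w)" by auto
  also have "(\<Sum>B\<in>Pow (A \<inter> w). (-1) ^ card B) = (\<Sum>B\<in>Pow (A \<inter> w). (\<Prod>x\<in>B. (-1::'a)) * (\<Prod>x\<in>(A \<inter> w) - B. 1))"
    by simp
  also have "\<dots> = (\<Prod>x\<in>A \<inter> w. (-1) + (1::'a))"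
    using assms by (intro prod_add[symmetric]) auto
  also have "\<dots> = (if A \<inter> w = {} then 1 else 0)"
    using assms by (simp add: card_gt_0_iff)
  finally show ?thesis .
qed

definition ee :: "nat \<Rightarrow> nat set set \<Rightarrow> (nat set \<Rightarrow> nat set) \<Rightarrow> nat set \<Rightarrow> nat set \<Rightarrow> 'a::field" where
  "ee n S h U = (\<lambda>w. if w \<in> FF n S h \<and> U \<subseteq> w then 1 else 0)"

definition dd :: "nat set \<Rightarrow> nat set \<Rightarrow> 'a::field" where
  "dd v = (\<lambda>w. if w = v then 1 else 0)"

lemma FF_iff: "w \<in> FF n S h \<longleftrightarrow> w \<subseteq> {1..n} \<and> (\<forall>A\<in>S. w \<notin> Q n A (h A))"
  unfolding FF_def by auto

lemma Q_iff:
  assumes "A \<subseteq> {1..n}" "H \<subseteq> A" "w \<subseteq> {1..n}"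
  shows "w \<in> Q n A H \<longleftrightarrow> H \<subseteq> w \<and> (A - H) \<inter> w = {}"
proof
  assume "w \<in> Q n A H"
  then obtain B where "w = H \<union> B" "B \<subseteq> {1..n} - A" unfolding Q_def by blast
  then show "H \<subseteq> w \<and> (A - H) \<inter> w = {}" by auto
next
  assume a: "H \<subseteq> w \<and> (A - H) \<inter> w = {}"
  have "w = H \<union> (w - A)" "w - A \<subseteq> {1..n} - A" using a assms by auto
  then show "w \<in> Q n A H" unfolding Q_def by blast
qed

lemma FF_sub: "w \<in> FF n S h \<Longrightarrow> w \<subseteq> {1..n}" by (simp add: FF_iff)

lemma ee_span_aux:
  assumes S: "S \<subseteq> Pow {1..n}" and hS: "\<forall>A\<in>S. h A \<subseteq> A"
  shows "U \<subseteq> {1..n} \<Longrightarrow> (ee n S h U :: nat set \<Rightarrow> 'a::field) \<in> fv.span (ee n S h ` {T \<in> HH n S. T \<subseteq> U})"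
proof (induction "card U" arbitrary: U rule: less_induct)
  case less
  have fU: "finite U" using less.prems finite_subset by blast
  show ?case
  proof (cases "U \<in> HH n S")
    case True
    then show ?thesis by (intro fv.span_base) auto
  next
    case False
    then obtain A where A: "A \<in> S" "A \<subseteq> U" using less.prems unfolding HH_def by auto
    define H where "H = h A"
    define D where "D = A - H"
    define V where "V = U - D"
    have HA: "H \<subseteq> A" using hS A H_def by auto
    have An: "A \<subseteq> {1..n}" using S A by auto
    have fD: "finite D" using fU A D_def finite_subset by blast
    have DU: "D \<subseteq> U" using A D_def by auto
    have VD: "V \<union> D = U" using DU V_def by auto
    have HV: "H \<subseteq> V" using HA A D_def V_def by auto
    let ?e = "ee n S h :: nat set \<Rightarrow> nat set \<Rightarrow> 'a"
    have ident: "(\<Sum>B\<in>Pow D. (-1) ^ card B * ?e (V \<union> B) w) = 0" for w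
    proof (cases "w \<in> FF n S h")
      case False then show ?thesis by (simp add: ee_def)
    next
      case True
      have "(\<Sum>B\<in>Pow D. (-1) ^ card B * ?e (V \<union> B) w)
          = (\<Sum>B\<in>Pow D. (if V \<subseteq> w then 1 else 0) * ((-1) ^ card B * (if B \<subseteq> w then 1 else 0)))"
        using True by (intro sum.cong refl) (auto simp: ee_def)
      also have "\<dots> = (if V \<subseteq> w then 1 else 0) * (if D \<inter> w = {} then 1 else 0)"
        by (simp only: sum_distrib_left[symmetric] alt_sum[OF fD])
      also have "\<dots> = 0"
      proof -
        have "\<not> (V \<subseteq> w \<and> D \<inter> w = {})"
        proof
          assume "V \<subseteq> w \<and> D \<inter> w = {}"
          then have "w \<in> Q n A H" using Q_iff[OF An HA FF_sub[OF True]] HV D_def by auto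
          then show False using True A H_def by (simp add: FF_iff)
        qed
        then show ?thesis by auto
      qed
      finally show ?thesis .
    qed
    have eq: "?e U = fsc (-((-1) ^ card D)) (\<Sum>B\<in>Pow D - {D}. fsc ((-1) ^ card B) (?e (V \<union> B)))"
    proof
      fix w
      let ?R = "(\<Sum>B\<in>Pow D - {D}. (-1) ^ card B * ?e (V \<union> B) w)"
      have "(\<Sum>B\<in>Pow D. (-1) ^ card B * ?e (V \<union> B) w) = (-1) ^ card D * ?e U w + ?R"
        using fD VD by (subst sum.remove[of _ D]) auto
      then have z: "(-1) ^ card D * ?e U w + ?R = 0" using ident[of w] by simp
      have "?e U w = ((-1) ^ card D * (-1) ^ card D) * ?e U w"
        by (simp add: power_mult_distrib[symmetric])
      also have "\<dots> = (-1) ^ card D * ((-1) ^ card D * ?e U w)" by (simp only: mult.assoc)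
      also have "(-1) ^ card D * ?e U w = - ?R" using z by (simp only: eq_neg_iff_add_eq_0)
      
      finally have "?e U w = -((-1) ^ card D) * ?R" by simp
      then show "?e U w = (-((-1) ^ card D)) * (\<Sum>B\<in>Pow D - {D}. (\<lambda>x. (-1) ^ card B * ?e (V \<union> B) x)) w"
        by (simp add: fun_sum_apply)
    qed
    have "?e (V \<union> B) \<in> fv.span (?e ` {T \<in> HH n S. T \<subseteq> U})" if B: "B \<in> Pow D - {D}" for B
    proof -
      have sub: "V \<union> B \<subset> U" using B DU V_def by auto
      then have "card (V \<union> B) < card U" using fU by (simp add: psubset_card_mono)
      then have "?e (V \<union> B) \<in> fv.span (?e ` {T \<in> HH n S. T \<subseteq> V \<union> B})"
        using less.hyps[of "V \<union> B"] sub less.prems by auto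
      also have "\<dots> \<subseteq> fv.span (?e ` {T \<in> HH n S. T \<subseteq> U})"
        using sub by (intro fv.span_mono) auto
      finally show ?thesis .
    qed
    then show ?thesis unfolding eq by (intro fv.span_scale fv.span_sum) auto
  qed
qed



lemma finite_FF: "finite (FF n S h)" unfolding FF_def by auto
lemma finite_HH: "finite (HH n S)"
  by (rule finite_subset[of _ "Pow {1..n}"]) (auto simp: HH_def)

lemma dd_span:
  assumes S: "S \<subseteq> Pow {1..n}" and hS: "\<forall>A\<in>S. h A \<subseteq> A" and v: "v \<in> FF n S h"
  shows "(dd v :: nat set \<Rightarrow> 'a::field) \<in> fv.span (ee n S h ` HH n S)"
proof -
  let ?e = "ee n S h :: nat set \<Rightarrow> nat set \<Rightarrow> 'a"
  let ?N = "{1..n} - v"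
  have vn: "v \<subseteq> {1..n}" using FF_sub[OF v] .
  have eq: "(dd v :: nat set \<Rightarrow> 'a) = (\<Sum>B\<in>Pow ?N. fsc ((-1) ^ card B) (?e (v \<union> B)))"
  proof
    fix w
    show "dd v w = (\<Sum>B\<in>Pow ?N. fsc ((-1) ^ card B) (?e (v \<union> B))) w"
    proof (cases "w \<in> FF n S h")
      case False
      then have "w \<noteq> v" using v by auto
      then show ?thesis using False by (simp add: fun_sum_apply dd_def ee_def)
    next
      case True
      have wn: "w \<subseteq> {1..n}" using FF_sub[OF True] .
      have "(\<Sum>B\<in>Pow ?N. fsc ((-1) ^ card B) (?e (v \<union> B))) w
          = (\<Sum>B\<in>Pow ?N. (if v \<subseteq> w then 1 else 0) * ((-1) ^ card B * (if B \<subseteq> w then 1 else 0)))"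
        unfolding fun_sum_apply using True by (intro sum.cong refl) (auto simp: ee_def)
      also have "\<dots> = (if v \<subseteq> w then 1 else 0) * (if ?N \<inter> w = {} then 1 else 0)"
        by (simp only: sum_distrib_left[symmetric] alt_sum[OF finite_Diff[OF finite_atLeastAtMost]])
      also have "\<dots> = dd v w" using vn wn by (auto simp: dd_def)
      finally show ?thesis by simp
    qed
  qed
  have "?e (v \<union> B) \<in> fv.span (?e ` HH n S)" if "B \<in> Pow ?N" for B
  proof -
    have "v \<union> B \<subseteq> {1..n}" using that vn by auto
    then have "?e (v \<union> B) \<in> fv.span (?e ` {T \<in> HH n S. T \<subseteq> v \<union> B})"
      by (rule ee_span_aux[OF S hS])
    also have "\<dots> \<subseteq> fv.span (?e ` HH n S)" by (intro fv.span_mono) auto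
    finally show ?thesis .
  qed
  then show ?thesis unfolding eq by (intro fv.span_scale fv.span_sum) auto
qed

lemma dd_inj: "inj_on (dd :: nat set \<Rightarrow> nat set \<Rightarrow> 'a::field) A"
proof
  fix x y assume "(dd x :: nat set \<Rightarrow> 'a) = dd y"
  then have "dd x x = (dd y x :: 'a)" by simp
  then show "x = y" by (auto simp: dd_def split: if_splits)
qed

lemma dd_indep: "finite A \<Longrightarrow> fv.independent (dd ` A :: (nat set \<Rightarrow> 'a::field) set)"
proof
  assume fA: "finite A" and dep: "fv.dependent (dd ` A :: (nat set \<Rightarrow> 'a) set)"
  obtain u where u: "\<exists>x\<in>dd ` A. u x \<noteq> 0" "(\<Sum>x\<in>dd ` A. fsc (u x) x) = (0 :: nat set \<Rightarrow> 'a)"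
    using dep unfolding fv.dependent_finite[OF finite_imageI[OF fA]] by blast
  then obtain v where v: "v \<in> A" "u (dd v) \<noteq> 0" by auto
  have "0 = (\<Sum>x\<in>dd ` A. fsc (u x) x) v" using u by simp
  also have "\<dots> = (\<Sum>x\<in>dd ` A. if x = dd v then u x else 0)"
    unfolding fun_sum_apply
  proof (intro sum.cong refl)
    fix x :: "nat set \<Rightarrow> 'a" assume "x \<in> dd ` A"
    then obtain y where y: "x = dd y" by auto
    have "dd y = (dd v :: nat set \<Rightarrow> 'a) \<longleftrightarrow> y = v" using inj_on_eq_iff[OF dd_inj[of UNIV]] by simp
    then show "u x * x v = (if x = dd v then u x else 0)" using y by (auto simp: dd_def)
  qed
  also have "\<dots> = u (dd v)" using fA v by (simp add: sum.delta')
  finally show False using v by simp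
qed

lemma ee_span_dd:
  "(ee n S h T :: nat set \<Rightarrow> 'a::field) \<in> fv.span (dd ` FF n S h)"
proof -
  have eq: "(ee n S h T :: nat set \<Rightarrow> 'a) = (\<Sum>v\<in>FF n S h. fsc (ee n S h T v) (dd v))"
  proof
    fix w
    have "(\<Sum>v\<in>FF n S h. fsc (ee n S h T v) (dd v)) w = (\<Sum>v\<in>FF n S h. if v = w then (ee n S h T w :: 'a) else 0)"
      unfolding fun_sum_apply by (intro sum.cong refl) (simp add: dd_def)
    also have "\<dots> = ee n S h T w" using finite_FF[of n S h] by (simp add: ee_def)
    finally show "(ee n S h T w :: 'a) = (\<Sum>v\<in>FF n S h. fsc (ee n S h T v) (dd v)) w" by (rule sym)
  qed
  have "fsc (ee n S h T v) (dd v :: nat set \<Rightarrow> 'a) \<in> fv.span (dd ` FF n S h)" if "v \<in> FF n S h" for v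
    by (rule fv.span_scale, rule fv.span_base) (use that in blast)
  then have "(\<Sum>v\<in>FF n S h. fsc (ee n S h T v) (dd v :: nat set \<Rightarrow> 'a)) \<in> fv.span (dd ` FF n S h)"
    by (rule fv.span_sum)
  then show ?thesis by (subst eq)
qed

lemma card_F_le:
  assumes S: "S \<subseteq> Pow {1..n}" and hS: "\<forall>A\<in>S. h A \<subseteq> A"
  shows "card (FF n S h) \<le> card (ee n S h ` HH n S :: (nat set \<Rightarrow> 'a::field) set)"
proof -
  have cdd: "card (dd ` FF n S h :: (nat set \<Rightarrow> 'a) set) = card (FF n S h)" by (rule card_image[OF dd_inj])
  have sub: "dd ` FF n S h \<subseteq> fv.span (ee n S h ` HH n S :: (nat set \<Rightarrow> 'a) set)"
    using dd_span[OF S hS] by blast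
  have "card (dd ` FF n S h :: (nat set \<Rightarrow> 'a) set) \<le> card (ee n S h ` HH n S :: (nat set \<Rightarrow> 'a) set)"
    using fv.independent_span_bound[OF finite_imageI[OF finite_HH[of n S]] dd_indep[OF finite_FF[of n S h]] sub]
    by auto
  then show ?thesis using cdd by simp
qed

lemma HH_le_F:
  assumes "inj_on (ee n S h :: nat set \<Rightarrow> nat set \<Rightarrow> 'a::field) (HH n S)"
    and "fv.independent (ee n S h ` HH n S :: (nat set \<Rightarrow> 'a) set)"
  shows "card (HH n S) \<le> card (FF n S h)"
proof -
  have cdd: "card (dd ` FF n S h :: (nat set \<Rightarrow> 'a) set) = card (FF n S h)" by (rule card_image[OF dd_inj])
  have "card (ee n S h ` HH n S :: (nat set \<Rightarrow> 'a) set) \<le> card (dd ` FF n S h :: (nat set \<Rightarrow> 'a) set)"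
    using fv.independent_span_bound[OF finite_imageI[OF finite_FF[of n S h]] assms(2)] ee_span_dd[of n S h] by blast
  then show ?thesis using card_image[OF assms(1)] cdd by simp
qed

lemma indep_of_eq:
  assumes S: "S \<subseteq> Pow {1..n}" and hS: "\<forall>A\<in>S. h A \<subseteq> A"
    and eq: "card (HH n S) = card (FF n S h)"
  shows "inj_on (ee n S h :: nat set \<Rightarrow> nat set \<Rightarrow> 'a::field) (HH n S)"
    "fv.independent (ee n S h ` HH n S :: (nat set \<Rightarrow> 'a) set)"
proof -
  let ?E = "ee n S h ` HH n S :: (nat set \<Rightarrow> 'a) set"
  have cdd: "card (dd ` FF n S h :: (nat set \<Rightarrow> 'a) set) = card (FF n S h)" by (rule card_image[OF dd_inj])
  have le: "card (FF n S h) \<le> card ?E" using card_F_le[OF S hS] .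
  have "card ?E \<le> card (HH n S)" using card_image_le[OF finite_HH[of n S]] .
  then have cE: "card ?E = card (HH n S)" using le eq by simp
  then show "inj_on (ee n S h :: nat set \<Rightarrow> nat set \<Rightarrow> 'a) (HH n S)"
    by (rule eq_card_imp_inj_on[OF finite_HH[of n S]])
  show "fv.independent ?E"
  proof
    assume "fv.dependent ?E"
    then obtain a where a: "a \<in> ?E" "a \<in> fv.span (?E - {a})" unfolding fv.dependent_def by blast
    have "?E \<subseteq> fv.span (?E - {a})"
    proof
      fix y assume "y \<in> ?E"
      then show "y \<in> fv.span (?E - {a})"
        using a(2) fv.span_base[of y "?E - {a}"] by (cases "y = a") auto
    qed
    then have "fv.span ?E \<subseteq> fv.span (?E - {a})" by (rule fv.span_minimal[OF _ fv.subspace_span])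
    then have "dd ` FF n S h \<subseteq> fv.span (?E - {a})" using dd_span[OF S hS] by blast
    moreover have fE: "finite (?E - {a})" using finite_HH[of n S] by simp
    ultimately have "card (dd ` FF n S h :: (nat set \<Rightarrow> 'a) set) \<le> card (?E - {a})"
      using fv.independent_span_bound[OF fE dd_indep[OF finite_FF[of n S h]]] by blast
    moreover have "card (?E - {a}) < card ?E" using a finite_HH[of n S] by (intro card_Diff1_less) auto
    ultimately show False using cdd cE eq by simp
  qed
qed



lemma finite_GG: "finite S \<Longrightarrow> finite (GG n S h :: 'a::field mpoly set)"
proof -
  assume "finite S"
  have "(GG n S h :: 'a mpoly set) = (\<lambda>A. fSH A (h A)) ` S \<union> (\<lambda>i. X i ^ 2 - X i) ` {1..n}"
    unfolding GG_def by blast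
  then show ?thesis using \<open>finite S\<close> by simp
qed

lemma mn_mon: "T \<subseteq> {1..n} \<Longrightarrow> mn T \<in> monomials n"
  using finite_subset[of T "{1..n}"] by (simp add: monomials_def keys_mn)

lemma polyring_fSH:
  assumes "A \<subseteq> {1..n}" "H \<subseteq> A"
  shows "(fSH A H :: 'a::field mpoly) \<in> polyring n"
  unfolding fSH_def xH_def
  using assms by (intro polyring_mult polyring_prod polyring_diff polyring_X polyring_one) auto

lemma GG_polyring:
  assumes S: "S \<subseteq> Pow {1..n}" and hS: "\<forall>A\<in>S. h A \<subseteq> A"
  shows "(GG n S h :: 'a::field mpoly set) \<subseteq> polyring n"
proof
  fix g :: "'a mpoly" assume "g \<in> GG n S h"
  then consider A where "A \<in> S" "g = fSH A (h A)" | i where "i \<in> {1..n}" "g = X i ^ 2 - X i"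
    unfolding GG_def by blast
  then show "g \<in> polyring n"
  proof cases
    case 1 then show ?thesis using S hS polyring_fSH[of A n "h A"] by auto
  next
    case 2 then show ?thesis by (simp add: polyring_diff polyring_power polyring_X)
  qed
qed

lemma X_sq: "(X i ^ 2 :: 'a::field mpoly) = Poly_Mapping.single (Poly_Mapping.single i 2) 1"
proof -
  have "(X i ^ 2 :: 'a mpoly) = X i * X i" by (simp add: power2_eq_square)
  also have "\<dots> = Poly_Mapping.single (Poly_Mapping.single i 1 + Poly_Mapping.single i 1) 1"
    by (simp add: X_def mult_single)
  also have "Poly_Mapping.single i 1 + Poly_Mapping.single i 1 = Poly_Mapping.single i (1 + 1::nat)"
    by (rule single_add[symmetric])
  also have "(1 + 1 :: nat) = 2" by simp
  finally show ?thesis .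
qed

lemma lm_sq:
  assumes to: "term_order n le" and i: "i \<in> {1..n}"
  shows "(X i ^ 2 - X i :: 'a::field mpoly) \<noteq> 0" "lm le (X i ^ 2 - X i :: 'a mpoly) = Poly_Mapping.single i 2"
proof -
  let ?p = "X i ^ 2 - X i :: 'a mpoly"
  have ne: "Poly_Mapping.single i (2::nat) \<noteq> Poly_Mapping.single i 1"
    by (metis inj_single injD numeral_One numeral_eq_iff semiring_norm(85))
  have lk: "Poly_Mapping.lookup ?p m = (if m = Poly_Mapping.single i 2 then 1 else 0) - (if m = Poly_Mapping.single i 1 then 1 else 0)" for m
    unfolding X_sq by (simp add: X_def lookup_minus lookup_single when_def)
  have top: "Poly_Mapping.single i 2 \<in> Poly_Mapping.keys ?p" using ne by (simp add: in_keys_iff lk)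
  then show "?p \<noteq> 0" by auto
  have ks: "Poly_Mapping.keys ?p \<subseteq> {Poly_Mapping.single i 2, Poly_Mapping.single i 1}"
    by (auto simp: in_keys_iff lk split: if_splits)
  have m2: "Poly_Mapping.single i 2 \<in> monomials n" "Poly_Mapping.single i 1 \<in> monomials n"
    using i by (auto simp: monomials_def)
  have ksm: "Poly_Mapping.keys ?p \<subseteq> monomials n" using ks m2 by blast
  have "le (Poly_Mapping.single i 1) (Poly_Mapping.single i 2)"
    by (rule dvd_le[OF to m2(2) m2(1)]) (simp add: mon_dvd_def lookup_single when_def)
  moreover have "le (Poly_Mapping.single i 2) (Poly_Mapping.single i 2)" using to_refl[OF to m2(1)] .
  ultimately have "\<forall>m'\<in>Poly_Mapping.keys ?p. le m' (Poly_Mapping.single i 2)" using ks by blast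
  then show "lm le ?p = Poly_Mapping.single i 2" using lm_eqI[OF to ksm top] by blast
qed

lemma lm_fSH:
  assumes to: "term_order n le" and A: "A \<subseteq> {1..n}" and H: "H \<subseteq> A"
  shows "(fSH A H :: 'a::field mpoly) \<noteq> 0" "lm le (fSH A H :: 'a mpoly) = mn A"
proof -
  let ?p = "fSH A H :: 'a mpoly"
  have fA: "finite A" using A finite_subset by blast
  have "Poly_Mapping.lookup ?p (mn A) = 1" by (rule fSH_lookup_top[OF fA H])
  then have top: "mn A \<in> Poly_Mapping.keys ?p" by (simp add: in_keys_iff)
  then show "?p \<noteq> 0" by auto
  have ks: "Poly_Mapping.keys ?p \<subseteq> {mn U | U. U \<subseteq> A}" by (rule fSH_keys[OF fA H])
  have ksm: "Poly_Mapping.keys ?p \<subseteq> monomials n"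
  proof
    fix m assume "m \<in> Poly_Mapping.keys ?p"
    then obtain U where "m = mn U" "U \<subseteq> A" using ks by blast
    then show "m \<in> monomials n" using mn_mon[of U n] A by auto
  qed
  have "le m' (mn A)" if m': "m' \<in> Poly_Mapping.keys ?p" for m'
  proof -
    obtain U where U: "m' = mn U" "U \<subseteq> A" using ks m' by blast
    have fU: "finite U" using U fA finite_subset by blast
    have "mon_dvd (mn U) (mn A)" unfolding mon_dvd_def using U fA fU by (auto simp: lookup_mn)
    then show ?thesis unfolding U(1) using dvd_le[OF to mn_mon[of U n] mn_mon[of A n]] U A by auto
  qed
  then show "lm le ?p = mn A" using lm_eqI[OF to ksm top] by blast
qed

lemma ev_gen_zero:
  assumes S: "S \<subseteq> Pow {1..n}" and hS: "\<forall>A\<in>S. h A \<subseteq> A"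
    and g: "g \<in> GG n S h" and w: "w \<in> FF n S h"
  shows "ev w (g :: 'a::field mpoly) = 0"
proof -
  consider A where "A \<in> S" "g = fSH A (h A)" | i where "i \<in> {1..n}" "g = X i ^ 2 - X i"
    using g unfolding GG_def by blast
  then show ?thesis
  proof cases
    case 1
    have An: "A \<subseteq> {1..n}" "h A \<subseteq> A" using 1 S hS by auto
    have "w \<notin> Q n A (h A)" using w 1 by (simp add: FF_iff)
    then have "\<not> (h A \<subseteq> w \<and> (A - h A) \<inter> w = {})" using Q_iff[OF An FF_sub[OF w]] by simp
    then obtain i where i: "(i \<in> h A \<and> i \<notin> w) \<or> (i \<in> A - h A \<and> i \<in> w)" by blast
    have fA: "finite A" using An finite_subset by blast
    have "ev w g = (\<Prod>j\<in>h A. ev w (X j)) * (\<Prod>j\<in>A - h A. ev w (X j) - ev w 1)"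
      using 1 by (simp add: fSH_def xH_def ev_mult ev_prod ev_diff)
    also have "\<dots> = 0"
    proof (cases "i \<in> h A \<and> i \<notin> w")
      case True
      then have "(\<Prod>j\<in>h A. ev w (X j) :: 'a) = 0"
        using fA An finite_subset[of "h A" A] by (intro prod_zero) (auto simp: ev_X intro!: bexI[of _ i])
      then show ?thesis by simp
    next
      case False
      then have "i \<in> A - h A" "i \<in> w" using i by auto
      then have "(\<Prod>j\<in>A - h A. ev w (X j) - ev w 1 :: 'a) = 0"
        using fA by (intro prod_zero) (auto simp: ev_X ev_one intro!: bexI[of _ i])
      then show ?thesis by simp
    qed
    finally show ?thesis .
  next
    case 2
    then show ?thesis by (simp add: ev_diff ev_power ev_X)
  qed
qed

lemma ev_ideal:
  assumes S: "S \<subseteq> Pow {1..n}" and hS: "\<forall>A\<in>S. h A \<subseteq> A"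
    and f: "f \<in> gen_ideal n (GG n S h)" and w: "w \<in> FF n S h"
  shows "ev w (f :: 'a::field mpoly) = 0"
proof -
  obtain q where q: "f = (\<Sum>g\<in>GG n S h. q g * g)" using f unfolding gen_ideal_def by blast
  show ?thesis unfolding q ev_sum ev_mult
  proof (intro sum.neutral ballI)
    fix g :: "'a mpoly" assume "g \<in> GG n S h"
    then have "ev w g = (0::'a)" by (rule ev_gen_zero[OF S hS _ w])
    then show "ev w (q g) * ev w g = 0" by simp
  qed
qed



definition delta :: "nat \<Rightarrow> nat set \<Rightarrow> 'a::field mpoly" where
  "delta n v = xH v * (\<Prod>i\<in>{1..n} - v. 1 - X i)"

definition cst :: "'a::field \<Rightarrow> 'a mpoly" where "cst c = Poly_Mapping.single 0 c"

lemma cst_mult: "cst c * Poly_Mapping.single m d = Poly_Mapping.single m (c * d)"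
  by (simp add: cst_def mult_single)

lemma cst_sum: "cst (sum f A) = (\<Sum>x\<in>A. cst (f x))"
  by (induction A rule: infinite_finite_induct) (simp_all add: cst_def single_add)

lemma cst_zero: "cst 0 = 0" by (simp add: cst_def)

lemma cst_polyring: "cst c \<in> polyring n"
  unfolding cst_def by (rule polyring_single) (simp add: monomials_def)

lemma xH_delta:
  assumes T: "T \<subseteq> {1..n}"
  shows "(xH T :: 'a::field mpoly) = (\<Sum>v\<in>Pow {1..n}. if T \<subseteq> v then delta n v else 0)"
proof -
  define N where "N = {1..n} - T"
  have fN: "finite N" unfolding N_def by simp
  have fT: "finite T" using T finite_subset by blast
  have "(1::'a mpoly) = (\<Prod>i\<in>N. X i + (1 - X i))" by simp
  also have "\<dots> = (\<Sum>B\<in>Pow N. (\<Prod>i\<in>B. X i) * (\<Prod>i\<in>N - B. 1 - X i))"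
    by (rule prod_add[OF fN])
  finally have one: "(1::'a mpoly) = (\<Sum>B\<in>Pow N. xH B * (\<Prod>i\<in>N - B. 1 - X i))"
    by (simp only: xH_def)
  have "(xH T :: 'a mpoly) = xH T * 1" by simp
  also have "\<dots> = xH T * (\<Sum>B\<in>Pow N. xH B * (\<Prod>i\<in>N - B. 1 - X i))"
    by (simp only: one[symmetric])
  also have "\<dots> = (\<Sum>B\<in>Pow N. delta n (T \<union> B))"
    unfolding sum_distrib_left
  proof (rule sum.cong[OF refl])
    fix B assume B: "B \<in> Pow N"
    have fB: "finite B" using B fN finite_subset by blast
    have dj: "T \<inter> B = {}" using B N_def by auto
    have e1: "{1..n} - (T \<union> B) = N - B" unfolding N_def by auto
    have u: "(xH (T \<union> B) :: 'a mpoly) = xH T * xH B" by (rule xH_union[OF fT fB dj])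
    show "xH T * (xH B * (\<Prod>i\<in>N - B. 1 - X i)) = (delta n (T \<union> B) :: 'a mpoly)"
      unfolding delta_def by (simp only: e1 u mult.assoc)
  qed
  also have "\<dots> = (\<Sum>v\<in>(\<lambda>B. T \<union> B) ` Pow N. delta n v)"
  proof -
    have inj: "inj_on (\<lambda>B. T \<union> B) (Pow N)" unfolding N_def inj_on_def by blast
    show ?thesis by (simp add: sum.reindex[OF inj] comp_def)
  qed
  also have "(\<lambda>B. T \<union> B) ` Pow N = {v \<in> Pow {1..n}. T \<subseteq> v}"
  proof
    show "(\<lambda>B. T \<union> B) ` Pow N \<subseteq> {v \<in> Pow {1..n}. T \<subseteq> v}" using T unfolding N_def by auto
    show "{v \<in> Pow {1..n}. T \<subseteq> v} \<subseteq> (\<lambda>B. T \<union> B) ` Pow N"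
    proof
      fix v assume v: "v \<in> {v \<in> Pow {1..n}. T \<subseteq> v}"
      then have "v = T \<union> (v - T)" "v - T \<in> Pow N" unfolding N_def by auto
      then show "v \<in> (\<lambda>B. T \<union> B) ` Pow N" by blast
    qed
  qed
  also have "(\<Sum>v\<in>{v \<in> Pow {1..n}. T \<subseteq> v}. delta n v) = (\<Sum>v\<in>Pow {1..n}. if T \<subseteq> v then delta n v else (0::'a mpoly))"
    by (rule sum.inter_filter) simp
  finally show ?thesis .
qed

lemma delta_ideal:
  assumes S: "S \<subseteq> Pow {1..n}" and hS: "\<forall>A\<in>S. h A \<subseteq> A"
    and v: "v \<subseteq> {1..n}" "v \<notin> FF n S h"
  shows "(delta n v :: 'a::field mpoly) \<in> gen_ideal n (GG n S h)"
proof -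
  obtain A where A: "A \<in> S" "v \<in> Q n A (h A)" using v by (auto simp: FF_iff)
  define H where "H = h A"
  define D where "D = A - H"
  define N where "N = {1..n} - v"
  have An: "A \<subseteq> {1..n}" "H \<subseteq> A" using A S hS H_def by auto
  have Hv: "H \<subseteq> v" "D \<inter> v = {}" using Q_iff[OF An v(1)] A H_def D_def by auto
  have DN: "D \<subseteq> N" using Hv An D_def N_def by auto
  have fN: "finite N" unfolding N_def by simp
  have fv: "finite v" using v(1) by (rule finite_subset) simp
  have fH: "finite H" using Hv(1) fv by (rule finite_subset)
  have p1: "(\<Prod>i\<in>N. 1 - X i :: 'a mpoly) = (\<Prod>i\<in>N - D. 1 - X i) * (\<Prod>i\<in>D. 1 - X i)"
    by (rule prod.subset_diff[OF DN fN])
  have p2: "(\<Prod>i\<in>D. 1 - X i :: 'a mpoly) = (-1) ^ card D * (\<Prod>i\<in>D. X i - 1)"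
  proof -
    have "(\<Prod>i\<in>D. 1 - X i :: 'a mpoly) = (\<Prod>i\<in>D. (-1) * (X i - 1))" by simp
    also have "\<dots> = (\<Prod>i\<in>D. -1) * (\<Prod>i\<in>D. X i - 1)" by (rule prod.distrib)
    finally show ?thesis by simp
  qed
  have x1: "(xH v :: 'a mpoly) = xH H * xH (v - H)"
  proof -
    have "v = H \<union> (v - H)" using Hv by auto
    then have "(xH v :: 'a mpoly) = xH (H \<union> (v - H))" by simp
    also have "\<dots> = xH H * xH (v - H)" using fv fH by (intro xH_union) auto
    finally show ?thesis .
  qed
  define r :: "'a mpoly" where "r = xH (v - H) * (\<Prod>i\<in>N - D. 1 - X i) * (-1) ^ card D"
  have eq: "delta n v = r * fSH A H"
    unfolding delta_def r_def fSH_def x1 N_def[symmetric] p1 p2 D_def[symmetric]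
    by (simp only: mult_ac)
  have r: "r \<in> polyring n" unfolding r_def xH_def
    using v N_def by (intro polyring_mult polyring_prod polyring_diff polyring_X polyring_one polyring_power polyring_uminus) auto
  have "fSH A H \<in> (GG n S h :: 'a mpoly set)" unfolding GG_def H_def using A by blast
  moreover have fS: "finite S" using S by (rule finite_subset) simp
  ultimately have "fSH A H \<in> gen_ideal n (GG n S h :: 'a mpoly set)"
    using gi_gen[OF finite_GG[OF fS]] by blast
  then show ?thesis unfolding eq by (rule gi_mult[OF r])
qed

lemma poly_in_ideal:
  assumes S: "S \<subseteq> Pow {1..n}" and hS: "\<forall>A\<in>S. h A \<subseteq> A"
    and c: "\<forall>w\<in>FF n S h. (\<Sum>T\<in>HH n S. c T * (if T \<subseteq> w then 1 else 0)) = (0::'a::field)"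
  shows "(\<Sum>T\<in>HH n S. Poly_Mapping.single (mn T) (c T)) \<in> gen_ideal n (GG n S h :: 'a mpoly set)"
proof -
  have HHn: "T \<subseteq> {1..n}" if "T \<in> HH n S" for T using that by (simp add: HH_def)
  have "(\<Sum>T\<in>HH n S. Poly_Mapping.single (mn T) (c T)) = (\<Sum>T\<in>HH n S. cst (c T) * xH T)"
  proof (rule sum.cong[OF refl])
    fix T assume "T \<in> HH n S"
    then have "finite T" using HHn finite_subset by blast
    then show "Poly_Mapping.single (mn T) (c T) = cst (c T) * (xH T :: 'a mpoly)"
      by (simp add: xH_eq cst_mult)
  qed
  also have "\<dots> = (\<Sum>T\<in>HH n S. \<Sum>v\<in>Pow {1..n}. if T \<subseteq> v then cst (c T) * delta n v else 0)"
  proof (rule sum.cong[OF refl])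
    fix T assume "T \<in> HH n S"
    then have xe: "(xH T :: 'a mpoly) = (\<Sum>v\<in>Pow {1..n}. if T \<subseteq> v then delta n v else 0)"
      by (intro xH_delta HHn)
    then show "cst (c T) * xH T = (\<Sum>v\<in>Pow {1..n}. if T \<subseteq> v then cst (c T) * delta n v else (0::'a mpoly))"
      unfolding xe sum_distrib_left by (intro sum.cong refl) simp
  qed
  also have "\<dots> = (\<Sum>v\<in>Pow {1..n}. \<Sum>T\<in>HH n S. if T \<subseteq> v then cst (c T) * delta n v else 0)"
    by (rule sum.swap)
  also have "\<dots> = (\<Sum>v\<in>Pow {1..n}. cst (\<Sum>T\<in>HH n S. c T * (if T \<subseteq> v then 1 else 0)) * delta n v)"
    unfolding cst_sum sum_distrib_right
    by (intro sum.cong refl) (simp add: cst_zero)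
  finally have eq: "(\<Sum>T\<in>HH n S. Poly_Mapping.single (mn T) (c T)) = \<dots>" .
  show ?thesis unfolding eq
  proof (rule gi_sum)
    fix v assume v: "v \<in> Pow {1..n}"
    show "cst (\<Sum>T\<in>HH n S. c T * (if T \<subseteq> v then 1 else 0)) * delta n v \<in> gen_ideal n (GG n S h :: 'a mpoly set)"
    proof (cases "v \<in> FF n S h")
      case True
      then show ?thesis using c by (simp add: cst_zero gi_zero)
    next
      case False
      then show ?thesis using v by (intro gi_mult[OF cst_polyring] delta_ideal[OF S hS]) auto
    qed
  qed
qed



lemma dep_coeffs:
  assumes "\<not> (inj_on (ee n S h :: nat set \<Rightarrow> nat set \<Rightarrow> 'a::field) (HH n S) \<and> fv.independent (ee n S h ` HH n S :: (nat set \<Rightarrow> 'a) set))"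
  shows "\<exists>c. (\<exists>T\<in>HH n S. c T \<noteq> 0) \<and> (\<forall>w. (\<Sum>T\<in>HH n S. c T * (ee n S h T w :: 'a)) = 0)"
proof (cases "inj_on (ee n S h :: nat set \<Rightarrow> nat set \<Rightarrow> 'a) (HH n S)")
  case False
  then obtain T1 T2 where T: "T1 \<in> HH n S" "T2 \<in> HH n S" "T1 \<noteq> T2" "(ee n S h T1 :: nat set \<Rightarrow> 'a) = ee n S h T2"
    unfolding inj_on_def by blast
  define c :: "nat set \<Rightarrow> 'a" where "c = (\<lambda>T. if T = T1 then 1 else if T = T2 then -1 else 0)"
  have "(\<Sum>T\<in>HH n S. c T * (ee n S h T w :: 'a)) = 0" for w
  proof -
    have "(\<Sum>T\<in>HH n S. c T * (ee n S h T w :: 'a)) = (\<Sum>T\<in>HH n S. (if T = T1 then ee n S h T1 w else 0) + (if T = T2 then - ee n S h T2 w else 0))"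
      by (intro sum.cong refl) (auto simp: c_def T(3))
    also have "\<dots> = ee n S h T1 w - ee n S h T2 w"
      using T finite_HH[of n S] by (simp add: sum.distrib)
    also have "\<dots> = 0" using T(4) by simp
    finally show ?thesis .
  qed
  moreover have "c T1 \<noteq> 0" by (simp add: c_def)
  ultimately show ?thesis using T(1) by blast
next
  case True
  let ?E = "ee n S h ` HH n S :: (nat set \<Rightarrow> 'a) set"
  have "fv.dependent ?E" using True assms by blast
  then obtain u where u: "\<exists>x\<in>?E. u x \<noteq> 0" "(\<Sum>x\<in>?E. fsc (u x) x) = 0"
    unfolding fv.dependent_finite[OF finite_imageI[OF finite_HH[of n S]]] by blast
  define c where "c = (\<lambda>T. u (ee n S h T :: nat set \<Rightarrow> 'a))"
  have "(\<Sum>T\<in>HH n S. c T * (ee n S h T w :: 'a)) = 0" for w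
  proof -
    have "(\<Sum>T\<in>HH n S. c T * (ee n S h T w :: 'a)) = (\<Sum>x\<in>?E. fsc (u x) x) w"
      unfolding fun_sum_apply c_def by (simp add: sum.reindex[OF True])
    then show ?thesis using u(2) by simp
  qed
  moreover have "\<exists>T\<in>HH n S. c T \<noteq> 0" using u(1) c_def by auto
  ultimately show ?thesis by blast
qed

lemma fwd:
  assumes S: "S \<subseteq> Pow {1..n}" and hS: "\<forall>A\<in>S. h A \<subseteq> A"
    and to: "term_order n le"
    and GB: "groebner_basis le (GG n S h :: 'a::field mpoly set) (gen_ideal n (GG n S h))"
  shows "inj_on (ee n S h :: nat set \<Rightarrow> nat set \<Rightarrow> 'a) (HH n S) \<and> fv.independent (ee n S h ` HH n S :: (nat set \<Rightarrow> 'a) set)"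
proof (rule ccontr)
  assume nt: "\<not> ?thesis"
  obtain c where c: "\<exists>T\<in>HH n S. c T \<noteq> 0" "\<forall>w. (\<Sum>T\<in>HH n S. c T * (ee n S h T w :: 'a)) = 0"
    using dep_coeffs[OF nt] by blast
  have HHn: "T \<subseteq> {1..n}" "finite T" if "T \<in> HH n S" for T
    using that finite_subset[of T "{1..n}"] by (auto simp: HH_def)
  have cw: "\<forall>w\<in>FF n S h. (\<Sum>T\<in>HH n S. c T * (if T \<subseteq> w then 1 else 0)) = (0::'a)"
  proof
    fix w assume w: "w \<in> FF n S h"
    have "(\<Sum>T\<in>HH n S. c T * (if T \<subseteq> w then 1 else 0)) = (\<Sum>T\<in>HH n S. c T * (ee n S h T w :: 'a))"
      using w by (intro sum.cong refl) (simp add: ee_def)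
    then show "(\<Sum>T\<in>HH n S. c T * (if T \<subseteq> w then 1 else 0)) = (0::'a)" using c(2) by simp
  qed
  define p :: "'a mpoly" where "p = (\<Sum>T\<in>HH n S. Poly_Mapping.single (mn T) (c T))"
  have pI: "p \<in> gen_ideal n (GG n S h)" unfolding p_def by (rule poly_in_ideal[OF S hS cw])
  have lp: "Poly_Mapping.lookup p (mn T) = c T" if T: "T \<in> HH n S" for T
  proof -
    have "Poly_Mapping.lookup p (mn T) = (\<Sum>T'\<in>HH n S. if T' = T then c T' else 0)"
      unfolding p_def lookup_sum
    proof (intro sum.cong refl)
      fix T' assume T': "T' \<in> HH n S"
      have "mn T' = mn T \<longleftrightarrow> T' = T" using HHn T T' by (intro mn_inj) auto
      then show "Poly_Mapping.lookup (Poly_Mapping.single (mn T') (c T')) (mn T) = (if T' = T then c T' else 0)"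
        by (simp add: lookup_single when_def)
    qed
    also have "\<dots> = c T" using T finite_HH[of n S] by simp
    finally show ?thesis .
  qed
  have kp: "Poly_Mapping.keys p \<subseteq> mn ` HH n S"
  proof -
    have "Poly_Mapping.keys p \<subseteq> (\<Union>T\<in>HH n S. Poly_Mapping.keys (Poly_Mapping.single (mn T) (c T)))"
      unfolding p_def by (rule keys_sum)
    also have "\<dots> \<subseteq> mn ` HH n S" by auto
    finally show ?thesis .
  qed
  have kpm: "Poly_Mapping.keys p \<subseteq> monomials n"
  proof
    fix m assume "m \<in> Poly_Mapping.keys p"
    then obtain T where "T \<in> HH n S" "m = mn T" using kp by blast
    then show "m \<in> monomials n" using HHn(1)[of T] mn_mon[of T n] by simp
  qed
  obtain T0 where T0: "T0 \<in> HH n S" "c T0 \<noteq> 0" using c(1) by blast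
  have "p \<noteq> 0" using lp[OF T0(1)] T0(2) by auto
  then have lmk: "lm le p \<in> Poly_Mapping.keys p" using lm_props[OF to kpm] by blast
  then have "lm le p \<in> mn ` HH n S" using kp by (rule subsetD[rotated])
  then obtain T1 where T1: "T1 \<in> HH n S" "lm le p = mn T1" by (rule imageE) simp
  have gb3: "\<forall>f\<in>gen_ideal n (GG n S h :: 'a mpoly set). f \<noteq> 0 \<longrightarrow> (\<exists>g\<in>(GG n S h :: 'a mpoly set). g \<noteq> 0 \<and> mon_dvd (lm le g) (lm le f))"
    using GB[unfolded groebner_basis_def] by (rule conjunct2[THEN conjunct2])
  have "\<exists>g\<in>(GG n S h :: 'a mpoly set). g \<noteq> 0 \<and> mon_dvd (lm le g) (lm le p)"
    using bspec[OF gb3 pI] \<open>p \<noteq> 0\<close> by (rule mp)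
  then obtain g where g: "g \<in> (GG n S h :: 'a mpoly set)" "g \<noteq> 0" "mon_dvd (lm le g) (mn T1)"
    using T1(2) by auto
  from g(1) consider A where "A \<in> S" "g = fSH A (h A)" | i where "i \<in> {1..n}" "g = X i ^ 2 - X i"
    unfolding GG_def by blast
  then show False
  proof cases
    case 1
    have An: "A \<subseteq> {1..n}" "h A \<subseteq> A" using 1 S hS by auto
    have fA: "finite A" using An finite_subset by blast
    have "lm le g = mn A" using lm_fSH[OF to An] 1 by simp
    have "A \<subseteq> T1"
    proof
      fix i assume i: "i \<in> A"
      have "Poly_Mapping.lookup (mn A) i \<le> Poly_Mapping.lookup (mn T1) i"
        using g(3) \<open>lm le g = mn A\<close> unfolding mon_dvd_def by simp
      then show "i \<in> T1" using i fA HHn(2)[OF T1(1)] by (simp add: lookup_mn split: if_splits)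
    qed
    then show False using T1(1) 1 by (auto simp: HH_def)
  next
    case 2
    have "lm le g = Poly_Mapping.single i 2" using lm_sq[OF to 2(1)] 2 by simp
    then have "Poly_Mapping.lookup (Poly_Mapping.single i 2) i \<le> Poly_Mapping.lookup (mn T1) i"
      using g(3) unfolding mon_dvd_def by metis
    then have "2 \<le> Poly_Mapping.lookup (mn T1) i" by simp
    then show False using HHn[OF T1(1)] by (simp add: lookup_mn split: if_splits)
  qed
qed



lemma term_order_le: "term_order n ((\<le>) :: mon \<Rightarrow> mon \<Rightarrow> bool)"
  unfolding term_order_def by (auto simp: zero_le_mon add_right_mono)

lemma bwd:
  assumes S: "S \<subseteq> Pow {1..n}" and hS: "\<forall>A\<in>S. h A \<subseteq> A"
    and eq: "card (HH n S) = card (FF n S h)"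
  shows "groebner_basis (\<le>) (GG n S h :: 'a::field mpoly set) (gen_ideal n (GG n S h))"
proof -
  let ?G = "GG n S h :: 'a mpoly set"
  let ?le = "(\<le>) :: mon \<Rightarrow> mon \<Rightarrow> bool"
  have to: "term_order n ?le" by (rule term_order_le)
  have fS: "finite S" using S by (rule finite_subset) simp
  have fG: "finite ?G" by (rule finite_GG[OF fS])
  have sub: "?G \<subseteq> gen_ideal n ?G" using gi_gen[OF fG] by blast
  have Ipoly: "gen_ideal n ?G \<subseteq> polyring n" by (rule gi_polyring[OF GG_polyring[OF S hS]])
  have inj: "inj_on (ee n S h :: nat set \<Rightarrow> nat set \<Rightarrow> 'a) (HH n S)"
    and ind: "fv.independent (ee n S h ` HH n S :: (nat set \<Rightarrow> 'a) set)"
    using indep_of_eq[OF S hS eq] by blast+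
  have core: "\<exists>g\<in>?G. g \<noteq> 0 \<and> mon_dvd (lm ?le g) (lm ?le f)" if f: "f \<in> gen_ideal n ?G" "f \<noteq> 0" for f
  proof -
    have kf: "Poly_Mapping.keys f \<subseteq> monomials n" using f Ipoly by (auto simp: polyring_def)
    define m where "m = lm ?le f"
    have mk: "m \<in> Poly_Mapping.keys f" and mmax: "\<forall>m'\<in>Poly_Mapping.keys f. m' \<le> m"
      using lm_props[OF to kf f(2)] unfolding m_def by auto
    have mn': "Poly_Mapping.keys m \<subseteq> {1..n}" using mk kf by (auto simp: monomials_def)
    show ?thesis
    proof (cases "\<exists>i. 2 \<le> Poly_Mapping.lookup m i")
      case True
      then obtain i where i: "2 \<le> Poly_Mapping.lookup m i" by blast
      then have "i \<in> Poly_Mapping.keys m" by (simp add: in_keys_iff)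
      then have i1: "i \<in> {1..n}" using mn' by blast
      have gG: "X i ^ 2 - X i \<in> ?G" unfolding GG_def using i1 by blast
      have "mon_dvd (Poly_Mapping.single i 2) m" unfolding mon_dvd_def
        using i by (simp add: lookup_single when_def)
      then show ?thesis using gG lm_sq[OF to i1] m_def by metis
    next
      case False
      define T where "T = Poly_Mapping.keys m"
      have fT: "finite T" unfolding T_def by simp
      have mT: "m = mn T"
      proof (rule poly_mapping_eqI)
        fix i
        have "\<not> 2 \<le> Poly_Mapping.lookup m i" using False by blast
        then have "Poly_Mapping.lookup m i \<le> 1" by simp
        then show "Poly_Mapping.lookup m i = Poly_Mapping.lookup (mn T) i"
          unfolding T_def by (auto simp: lookup_mn in_keys_iff)
      qed
      have Tn: "T \<subseteq> {1..n}" using mn' T_def by simp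
      show ?thesis
      proof (cases "\<exists>A\<in>S. A \<subseteq> T")
        case True
        then obtain A where A: "A \<in> S" "A \<subseteq> T" by blast
        have An: "A \<subseteq> {1..n}" "h A \<subseteq> A" using A S hS by auto
        have fA: "finite A" using An finite_subset by blast
        have gG: "fSH A (h A) \<in> ?G" unfolding GG_def using A by blast
        have "mon_dvd (mn A) (mn T)" unfolding mon_dvd_def using A fA fT by (auto simp: lookup_mn)
        then show ?thesis using gG lm_fSH[OF to An] m_def mT by metis
      next
        case False
        then have THH: "T \<in> HH n S" using Tn by (auto simp: HH_def)
        let ?e = "ee n S h :: nat set \<Rightarrow> nat set \<Rightarrow> 'a"
        have zero: "(\<Sum>m'\<in>Poly_Mapping.keys f. fsc (Poly_Mapping.lookup f m') (?e (Poly_Mapping.keys m'))) = 0"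
        proof
          fix w
          show "(\<Sum>m'\<in>Poly_Mapping.keys f. fsc (Poly_Mapping.lookup f m') (?e (Poly_Mapping.keys m'))) w = 0 w"
          proof (cases "w \<in> FF n S h")
            case True
            have "(\<Sum>m'\<in>Poly_Mapping.keys f. fsc (Poly_Mapping.lookup f m') (?e (Poly_Mapping.keys m'))) w = ev w f"
              unfolding fun_sum_apply ev_def using True by (intro sum.cong refl) (simp add: ee_def chi_def)
            also have "\<dots> = 0" by (rule ev_ideal[OF S hS f(1) True])
            finally show ?thesis by simp
          next
            case False
            then show ?thesis unfolding fun_sum_apply by (simp add: ee_def)
          qed
        qed
        let ?R = "(\<Sum>m'\<in>Poly_Mapping.keys f - {m}. fsc (Poly_Mapping.lookup f m') (?e (Poly_Mapping.keys m')))"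
        have split: "fsc (Poly_Mapping.lookup f m) (?e T) + ?R = 0"
          using zero mk unfolding T_def by (simp add: sum.remove[OF finite_keys mk])
        have Rspan: "?R \<in> fv.span (?e ` (HH n S - {T}))"
        proof (intro fv.span_sum fv.span_scale)
          fix m' assume m': "m' \<in> Poly_Mapping.keys f - {m}"
          have m'n: "Poly_Mapping.keys m' \<subseteq> {1..n}" using m' kf by (auto simp: monomials_def)
          have "?e (Poly_Mapping.keys m') \<in> fv.span (?e ` {T' \<in> HH n S. T' \<subseteq> Poly_Mapping.keys m'})"
            by (rule ee_span_aux[OF S hS m'n])
          also have "\<dots> \<subseteq> fv.span (?e ` (HH n S - {T}))"
          proof (rule fv.span_mono, rule image_mono, rule subsetI)
            fix T' assume T': "T' \<in> {T' \<in> HH n S. T' \<subseteq> Poly_Mapping.keys m'}"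
            have "T' \<noteq> T"
            proof
              assume "T' = T"
              then have sub': "T \<subseteq> Poly_Mapping.keys m'" using T' by simp
              have "mon_dvd (mn T) m'" unfolding mon_dvd_def
              proof
                fix i show "Poly_Mapping.lookup (mn T) i \<le> Poly_Mapping.lookup m' i"
                  using sub' fT by (auto simp: lookup_mn in_keys_iff)
              qed
              moreover have "m' \<in> monomials n" "mn T \<in> monomials n" using m' kf mT mk by auto
              ultimately have "mn T \<le> m'" using dvd_le[OF to] by blast
              moreover have "m' \<le> m" using mmax m' by blast
              ultimately show False using mT m' by auto
            qed
            then show "T' \<in> HH n S - {T}" using T' by blast
          qed
          finally show "?e (Poly_Mapping.keys m') \<in> fv.span (?e ` (HH n S - {T}))" .
        qed
        have cne: "Poly_Mapping.lookup f m \<noteq> 0" using mk by (simp add: in_keys_iff)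
        have "?e T = fsc (1 / Poly_Mapping.lookup f m) (- ?R)"
        proof
          fix w
          have "Poly_Mapping.lookup f m * ?e T w + ?R w = 0" using fun_cong[OF split, of w] by simp
          then have "?e T w = - ?R w / Poly_Mapping.lookup f m" using cne by (simp add: field_simps eq_neg_iff_add_eq_0)
          then show "?e T w = fsc (1 / Poly_Mapping.lookup f m) (- ?R) w" by simp
        qed
        also have "\<dots> \<in> fv.span (?e ` (HH n S - {T}))" by (intro fv.span_scale fv.span_neg Rspan)
        also have "\<dots> \<subseteq> fv.span (?e ` HH n S - {?e T})"
          using inj THH by (intro fv.span_mono) (auto simp: inj_on_eq_iff)
        finally have "fv.dependent (?e ` HH n S)" unfolding fv.dependent_def using THH by blast
        then show ?thesis using ind by blast
      qed
    qed
  qed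
  show ?thesis unfolding groebner_basis_def using fG sub core by blast
qed

theorem theorem22:
  fixes n :: nat and S :: "nat set set" and h :: "nat set \<Rightarrow> nat set"
  assumes "S \<subseteq> Pow {1..n}" and "sperner S"
    and "\<forall>A\<in>S. h A \<subseteq> A"
  shows "(\<exists>le. term_order n le \<and>
            groebner_basis le (GG n S h :: ('a::field) mpoly set) (gen_ideal n (GG n S h)))
         \<longleftrightarrow> card (HH n S) = card (FF n S h)"
proof
  assume "\<exists>le. term_order n le \<and> groebner_basis le (GG n S h :: 'a mpoly set) (gen_ideal n (GG n S h))"
  then obtain le where to: "term_order n le" and GB: "groebner_basis le (GG n S h :: 'a mpoly set) (gen_ideal n (GG n S h))"
    by blast
  have ii: "inj_on (ee n S h :: nat set \<Rightarrow> nat set \<Rightarrow> 'a) (HH n S) \<and> fv.independent (ee n S h ` HH n S :: (nat set \<Rightarrow> 'a) set)"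
    by (rule fwd[OF assms(1) assms(3) to GB])
  have 1: "card (HH n S) \<le> card (FF n S h)" using HH_le_F ii by blast
  have "card (FF n S h) \<le> card (ee n S h ` HH n S :: (nat set \<Rightarrow> 'a) set)"
    by (rule card_F_le[OF assms(1) assms(3)])
  also have "\<dots> \<le> card (HH n S)" by (rule card_image_le[OF finite_HH])
  finally show "card (HH n S) = card (FF n S h)" using 1 by simp
next
  assume "card (HH n S) = card (FF n S h)"
  then have "groebner_basis (\<le>) (GG n S h :: 'a mpoly set) (gen_ideal n (GG n S h))"
    by (rule bwd[OF assms(1) assms(3)])
  then show "\<exists>le. term_order n le \<and> groebner_basis le (GG n S h :: 'a mpoly set) (gen_ideal n (GG n S h))"
    using term_order_le by blast
qed


end
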